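(* Let $N\ge 2$ be even and let $B_N=K_{N/2,N/2}$ be the complete bipartite graph with two parts of size $N/2$ each, and $K_N$ the complete graph, both on vertex set $\{1,\dots,N\}$. Then \[ \rho(B_N,K_N)>\frac{1}{e-1}\cdot\frac1N \qquad\text{and}\qquad \rho(K_N,B_N)<\frac{e}{e-1}\cdot\frac1N. \]
   Context: Moran Birth-death process on two graphs (neutral case): $G^A$ and $G^B$ are connected undirected simple graphs on the same vertex set $\{1,\dots,N\}$. Every vertex is occupied by exactly one individual, of type $A$ (mutant) or type $B$ (resident). In each discrete time step, one individual is chosen uniformly at random among all $N$ individuals to reproduce; its offspring (of the same type) replaces the individual at a vertex chosen uniformly at random among the neighbors of the parent's vertex, where neighbors are taken in $G^A$ if the parent is of type $A$ and in $G^B$ if the parent is of type $B$. The all-$A$ and all-$B$ states are absorbing. The fixation probability $\rho(G^A,G^B)$ is the probability that the process reaches the all-$A$ state when started from exactly one type-$A$ individual at a uniformly random vertex, all other vertices of type $B$. Here $e$ is Euler's number. *)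

theory Defs
  imports "HOL-Probability.Probability"
begin

text \<open>A graph on the vertex set {1..N} is given by a symmetric irreflexive
adjacency relation E. States of the Moran process are the sets of vertices
occupied by type A (mutants); all other vertices of {1..N} are type B.\<close>

definition nbrs :: "(nat \<Rightarrow> nat \<Rightarrow> bool) \<Rightarrow> nat \<Rightarrow> nat \<Rightarrow> nat set" where
  "nbrs E N v = {u \<in> {1..N}. E v u}"

text \<open>One step of the neutral Birth-death process: a uniformly random individual
reproduces; its offspring replaces a uniformly random neighbour, neighbours taken
in GA (edge relation EA) if the parent is of type A and in GB (EB) otherwise.\<close>

definition moran_step ::
  "(nat \<Rightarrow> nat \<Rightarrow> bool) \<Rightarrow> (nat \<Rightarrow> nat \<Rightarrow> bool) \<Rightarrow> nat \<Rightarrow> nat set \<Rightarrow> nat set pmf" where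
  "moran_step EA EB N S =
     bind_pmf (pmf_of_set {1..N}) (\<lambda>v.
       if v \<in> S then map_pmf (\<lambda>u. insert u S) (pmf_of_set (nbrs EA N v))
       else map_pmf (\<lambda>u. S - {u}) (pmf_of_set (nbrs EB N v)))"

definition moran_dist ::
  "(nat \<Rightarrow> nat \<Rightarrow> bool) \<Rightarrow> (nat \<Rightarrow> nat \<Rightarrow> bool) \<Rightarrow> nat \<Rightarrow> nat set \<Rightarrow> nat \<Rightarrow> nat set pmf" where
  "moran_dist EA EB N S n = ((\<lambda>p. bind_pmf p (moran_step EA EB N)) ^^ n) (return_pmf S)"

text \<open>Fixation probability: probability of (eventually) reaching the all-A state
{1..N}; since this state is absorbing, it is the limit of the probability of being
in it at time n.\<close>

definition fix_prob ::
  "(nat \<Rightarrow> nat \<Rightarrow> bool) \<Rightarrow> (nat \<Rightarrow> nat \<Rightarrow> bool) \<Rightarrow> nat \<Rightarrow> real" where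
  "fix_prob EA EB N =
     (\<Sum>v\<in>{1..N}. lim (\<lambda>n. pmf (moran_dist EA EB N {v} n) {1..N})) / real N"

text \<open>Complete graph K_N and complete bipartite graph K_{N/2,N/2} with parts
{1..N/2} and {N/2+1..N}.\<close>

definition complete_graph :: "nat \<Rightarrow> nat \<Rightarrow> bool" where
  "complete_graph u v \<longleftrightarrow> u \<noteq> v"

definition bipartite_half :: "nat \<Rightarrow> nat \<Rightarrow> nat \<Rightarrow> bool" where
  "bipartite_half N u v \<longleftrightarrow> ((u \<le> N div 2) \<noteq> (v \<le> N div 2))"

end

theory Submission
  imports Defs
begin


lemma e_gt: "exp (1::real) > 2.7"
  using e_approx_32 by (simp add: abs_if split: if_splits)

lemma ln_bound3:
  assumes "(0::real) \<le> x"
  shows "ln (1 + x) \<le> x - x^2/2 + x^3/3"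
proof -
  let ?f = "\<lambda>t::real. t - t^2/2 + t^3/3 - ln (1 + t)"
  have "?f 0 \<le> ?f x"
  proof (rule DERIV_nonneg_imp_nondecreasing[OF assms])
    fix t :: real assume t: "0 \<le> t" "t \<le> x"
    have "(?f has_real_derivative (1 - t + t^2 - 1/(1+t))) (at t)"
      using t by (auto intro!: derivative_eq_intros simp: power2_eq_square field_simps)
    moreover have "1 - t + t^2 - 1/(1+t) = t^3/(1+t)"
      using t by (simp add: field_simps power2_eq_square power3_eq_cube)
    moreover have "t^3/(1+t) \<ge> 0" using t by simp
    ultimately show "\<exists>y. (?f has_real_derivative y) (at t) \<and> 0 \<le> y" by auto
  qed
  then show ?thesis by simp
qed

lemma upper_num:
  assumes "N \<ge> (2::nat)"
  shows "(1 - (real N - 1) / real N) / (1 - ((real N - 1) / real N) ^ N) < exp 1 / (exp 1 - 1) * (1 / real N)"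
proof -
  have Np: "real N > 0" using assms by simp
  have q: "(real N - 1) / real N = 1 - 1 / real N" using Np by (simp add: field_simps)
  have "1 - 1 / real N < exp (- (1 / real N))" using exp_minus_greater[of "1/real N"] Np by simp
  then have "(1 - 1 / real N) ^ N < exp (- (1 / real N)) ^ N"
    by (rule power_strict_mono) (use assms Np in auto)
  also have "exp (- (1 / real N)) ^ N = exp (-1)"
    using Np by (simp add: exp_of_nat_mult[symmetric])
  finally have qN: "((real N - 1) / real N) ^ N < exp (-1)" using q by simp
  have em: "exp (-1::real) = 1 / exp 1" by (simp add: exp_minus field_simps)
  have e1: "exp (1::real) > 1" by simp
  have pos: "1 - exp (-1::real) > 0" using em e1 by simp
  have "(1 - (real N - 1) / real N) = 1 / real N" using Np by (simp add: field_simps)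
  moreover have "(1 / real N) / (1 - ((real N - 1) / real N) ^ N) < (1 / real N) / (1 - exp (-1))"
  proof -
    have p2: "1 - ((real N - 1) / real N) ^ N > 0" using qN pos by linarith
    show ?thesis using qN pos Np p2 by (intro divide_strict_left_mono mult_pos_pos) auto
  qed
  moreover have "(1 / real N) / (1 - exp (-1)) = exp 1 / (exp 1 - 1) * (1 / real N)"
  proof -
    have "\<forall>E::real. E > 1 \<longrightarrow> (1/real N)/(1 - 1/E) = E/(E-1)*(1/real N)" by (auto simp: field_simps)
    then show ?thesis using em e1 by metis
  qed
  ultimately show ?thesis by simp
qed

lemma lower_num:
  assumes "even N" "N \<ge> (2::nat)"
  shows "(real N / (real N - 1) - 1) / ((real N / (real N - 1)) ^ N - 1) > 1 / (exp 1 - 1) * (1 / real N)"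
proof -
  have e: "exp (1::real) > 2.7" by (rule e_gt)
  define m where "m = real N - 1"
  have Nm: "real N = m + 1" by (simp add: m_def)
  have m1: "m \<ge> 1" using assms(2) by (simp add: m_def)
  have r: "real N / (real N - 1) = 1 + 1 / m" using m1 by (simp add: Nm field_simps)
  have rm1: "real N / (real N - 1) - 1 = 1 / m" using r by simp
  define R where "R = (1 + 1/m) ^ N"
  have R1: "R > 1" unfolding R_def using m1 assms(2) by (intro one_less_power) auto
  have bound: "m * (R - 1) < (exp 1 - 1) * (m + 1)"
  proof (cases "N = 2")
    case True
    then have "m = 1" "R = 4" using Nm by (auto simp: R_def)
    then show ?thesis using e by simp
  next
    case False
    then have N4: "N \<ge> 4" using assms by presburger
    then have m3: "m \<ge> 3" using Nm by simp
    have "ln (1 + 1/m) \<le> 1/m - (1/m)^2/2 + (1/m)^3/3" using m1 by (intro ln_bound3) simp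
    then have "real N * ln (1 + 1/m) \<le> (m + 1) * (1/m - (1/m)^2/2 + (1/m)^3/3)"
      using Nm by (simp add: mult_left_mono)
    also have "\<dots> \<le> 1 + 1/(2*m)"
    proof -
      have "(m + 1) * (1/m - (1/m)^2/2 + (1/m)^3/3) = 1 + 1/(2*m) - 1/(6*m^2) + 1/(3*m^3)"
        using m1 by (simp add: field_simps power2_eq_square power3_eq_cube)
      moreover have "1/(3*m^3) \<le> 1/(6*m^2)"
        using m3 by (simp add: field_simps power2_eq_square power3_eq_cube)
      ultimately show ?thesis by simp
    qed
    finally have lnR: "real N * ln (1 + 1/m) \<le> 1 + 1/(2*m)" .
    have "exp (real N * ln (1 + 1/m)) = exp (ln (1 + 1/m)) ^ N" by (rule exp_of_nat_mult)
    also have "exp (ln (1 + 1/m)) = 1 + 1/m" using m1 by (intro exp_ln) (simp add: add_pos_pos)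
    finally have "R = exp (real N * ln (1 + 1/m))" unfolding R_def by simp
    also have "\<dots> \<le> exp (1 + 1/(2*m))" using lnR by simp
    also have "\<dots> = exp 1 * exp (1/(2*m))" by (simp add: exp_add)
    also have "\<dots> \<le> exp 1 * (2*m/(2*m - 1))"
    proof -
      have "1 - 1/(2*m) \<le> exp (- (1/(2*m)))" by (rule exp_minus_ge)
      then have "1 / exp (- (1/(2*m))) \<le> 1 / (1 - 1/(2*m))"
        using m1 by (intro divide_left_mono) (auto simp: field_simps)
      moreover have "1 / exp (- (1/(2*m))) = exp (1/(2*m))" by (simp add: exp_minus field_simps)
      moreover have "1 / (1 - 1/(2*m)) = 2*m/(2*m - 1)" using m1 by (simp add: field_simps)
      ultimately have "exp (1/(2*m)) \<le> 2*m/(2*m - 1)" by simp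
      then show ?thesis by (rule mult_left_mono) simp
    qed
    finally have RB: "R \<le> exp 1 * (2*m/(2*m - 1))" .
    have "m * (exp 1 * (2*m/(2*m - 1)) - 1) < (exp 1 - 1) * (m + 1)"
    proof -
      have d: "2*m - 1 > 0" using m1 by simp
      have "m * (exp 1 * (2*m) - (2*m - 1)) < (exp 1 - 1) * (m + 1) * (2*m - 1)"
      proof -
        have "(exp 1 - 1) * (m + 1) * (2*m - 1) - m * (exp 1 * (2*m) - (2*m - 1)) = m * (exp 1 - 2) - (exp 1 - 1)"
          by (simp add: algebra_simps)
        moreover have "m * (exp 1 - 2) \<ge> 3 * (exp 1 - 2)" using m3 e by (intro mult_right_mono) auto
        ultimately have "(exp 1 - 1) * (m + 1) * (2*m - 1) - m * (exp 1 * (2*m) - (2*m - 1)) > 0" using e by simp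
        then show ?thesis by simp
      qed
      then show ?thesis using d by (simp add: field_simps)
    qed
    moreover have "m * (R - 1) \<le> m * (exp 1 * (2*m/(2*m - 1)) - 1)"
      using RB m1 by (intro mult_left_mono) auto
    ultimately show ?thesis by linarith
  qed
  have "1 / (exp 1 - 1) * (1 / real N) = (1/m) / ((exp 1 - 1) * (m + 1) / m)"
    using m1 Nm by (simp add: field_simps)
  also have "\<dots> < (1/m) / (R - 1)"
  proof (rule divide_strict_left_mono)
    show "R - 1 < (exp 1 - 1) * (m + 1) / m" using bound m1 by (simp add: field_simps)
    show "0 < 1/m" using m1 by simp
    show "0 < (exp 1 - 1) * (m + 1) / m * (R - 1)" using R1 m1 e by (intro mult_pos_pos divide_pos_pos) auto
  qed
  finally show ?thesis unfolding r R_def by simp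
qed


lemma nbrs_sub: "nbrs E N v \<subseteq> {1..N}" by (auto simp: nbrs_def)
lemma nbrs_fin[simp]: "finite (nbrs E N v)" by (rule finite_subset[OF nbrs_sub]) simp

definition goodG where
  "goodG EA EB N \<longleftrightarrow> (\<forall>v\<in>{1..N}. nbrs EA N v \<noteq> {} \<and> nbrs EB N v \<noteq> {}) \<and> N \<ge> 1"

lemma step_support:
  assumes "goodG EA EB N" "S \<subseteq> {1..N}"
  shows "set_pmf (moran_step EA EB N S) \<subseteq> Pow {1..N}"
proof -
  have ne: "{1..N} \<noteq> {}" using assms(1) by (auto simp: goodG_def)
  show ?thesis
    unfolding moran_step_def using assms nbrs_sub ne
    by (auto simp: goodG_def set_bind_pmf subset_iff split: if_splits)
qed

lemma dist_Suc: "moran_dist EA EB N S0 (Suc n) = bind_pmf (moran_dist EA EB N S0 n) (moran_step EA EB N)"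
  by (simp add: moran_dist_def)

lemma dist_support:
  assumes "goodG EA EB N" "S0 \<subseteq> {1..N}"
  shows "set_pmf (moran_dist EA EB N S0 n) \<subseteq> Pow {1..N}"
proof (induction n)
  case 0 then show ?case using assms by (simp add: moran_dist_def)
next
  case (Suc n) then show ?case using step_support[OF assms(1)]
    by (auto simp: dist_Suc set_bind_pmf)
qed

abbreviation E :: "nat set pmf \<Rightarrow> (nat set \<Rightarrow> real) \<Rightarrow> real" where
  "E p f \<equiv> measure_pmf.expectation p f"

lemma E_sum: "set_pmf p \<subseteq> Pow {1..N} \<Longrightarrow> E p f = (\<Sum>S\<in>Pow {1..N}. pmf p S * f S)"
  by (subst integral_measure_pmf[where A="Pow {1..N}"]) auto

lemma fin_sub: "A \<subseteq> Pow {1..(N::nat)} \<Longrightarrow> finite A"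
  by (rule finite_subset[where B="Pow {1..N}"]) auto

lemma E_Suc:
  assumes "goodG EA EB N" "S0 \<subseteq> {1..N}"
  shows "E (moran_dist EA EB N S0 (Suc n)) f =
     (\<Sum>S\<in>Pow {1..N}. pmf (moran_dist EA EB N S0 n) S * E (moran_step EA EB N S) f)"
proof -
  have fs: "finite (set_pmf (moran_step EA EB N S))" if "S \<in> Pow {1..N}" for S
    using step_support[OF assms(1)] that fin_sub[of _ N] by simp
  have "E (bind_pmf (moran_dist EA EB N S0 n) (moran_step EA EB N)) f =
     (\<Sum>S\<in>Pow {1..N}. pmf (moran_dist EA EB N S0 n) S *\<^sub>R E (moran_step EA EB N S) f)"
    by (rule pmf_expectation_bind) (use fs dist_support[OF assms] in auto)
  then show ?thesis unfolding dist_Suc by simp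
qed

lemma E_step_mono:
  assumes "goodG EA EB N" "S0 \<subseteq> {1..N}"
    and "\<And>S. S \<subseteq> {1..N} \<Longrightarrow> E (moran_step EA EB N S) f \<ge> f S + g S"
  shows "E (moran_dist EA EB N S0 (Suc n)) f \<ge> E (moran_dist EA EB N S0 n) f + E (moran_dist EA EB N S0 n) g"
proof -
  let ?p = "moran_dist EA EB N S0 n"
  have "E ?p f + E ?p g = (\<Sum>S\<in>Pow {1..N}. pmf ?p S * (f S + g S))"
    using E_sum[OF dist_support[OF assms(1,2)]] by (simp add: sum.distrib distrib_left)
  also have "\<dots> \<le> (\<Sum>S\<in>Pow {1..N}. pmf ?p S * E (moran_step EA EB N S) f)"
    by (rule sum_mono) (use assms(3) in \<open>auto intro: mult_left_mono\<close>)
  finally show ?thesis using E_Suc[OF assms(1,2)] by simp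
qed

lemma E_0: "E (moran_dist EA EB N S0 0) f = f S0"
  by (simp add: moran_dist_def)

lemma E_mono_gen:
  assumes "goodG EA EB N" "S0 \<subseteq> {1..N}"
    and "\<And>S. S \<subseteq> {1..N} \<Longrightarrow> E (moran_step EA EB N S) f \<ge> f S"
  shows "E (moran_dist EA EB N S0 n) f \<ge> f S0"
proof (induction n)
  case 0 then show ?case by (simp add: E_0)
next
  case (Suc n)
  have "E (moran_dist EA EB N S0 (Suc n)) f \<ge> E (moran_dist EA EB N S0 n) f + E (moran_dist EA EB N S0 n) (\<lambda>_. 0)"
    by (rule E_step_mono[OF assms(1,2)]) (use assms(3) in auto)
  then show ?case using Suc by simp
qed


lemma avg_if:
  assumes "finite A" "A \<noteq> {}"
  shows "(\<Sum>u\<in>A. if u \<in> S then a else b) / real (card A)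
       = a + (b - a) * real (card (A - S)) / real (card A)"
proof -
  have c: "card A = card (A \<inter> S) + card (A - S)"
    using assms(1) by (metis card_Int_Diff)
  have "(\<Sum>u\<in>A. if u \<in> S then a else b) = a * card (A \<inter> S) + b * card (A - S)"
    using assms(1) by (simp add: sum.If_cases Diff_eq)
  moreover have "card A > 0" using assms card_gt_0_iff by blast
  then have "real (card (A \<inter> S)) + real (card (A - S)) > 0" using c by linarith
  ultimately show ?thesis using c by (simp add: field_simps)
qed

lemma step_card:
  assumes G: "goodG EA EB N" and S: "S \<subseteq> {1..N}"
  shows "E (moran_step EA EB N S) (\<lambda>T. g (card T)) =
     g (card S) + (g (Suc (card S)) - g (card S)) *
        ((\<Sum>v\<in>S. real (card (nbrs EA N v - S)) / card (nbrs EA N v)) / N)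
     + (g (card S - 1) - g (card S)) *
        ((\<Sum>v\<in>{1..N}-S. real (card (nbrs EB N v \<inter> S)) / card (nbrs EB N v)) / N)"
proof -
  let ?s = "card S"
  have finS: "finite S" by (rule finite_subset[OF S]) simp
  have ne: "{1..N} \<noteq> {}" using G by (auto simp: goodG_def)
  define x where "x v = real (card (nbrs EA N v - S)) / card (nbrs EA N v)" for v
  define y where "y v = real (card (nbrs EB N v \<inter> S)) / card (nbrs EB N v)" for v
  have fA: "set_pmf (pmf_of_set (nbrs EA N v)) = nbrs EA N v" if "v \<in> {1..N}" for v
    using G that by (auto simp: goodG_def)
  have fB: "set_pmf (pmf_of_set (nbrs EB N v)) = nbrs EB N v" if "v \<in> {1..N}" for v
    using G that by (auto simp: goodG_def)
  have val: "E (if v \<in> S then map_pmf (\<lambda>u. insert u S) (pmf_of_set (nbrs EA N v))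
             else map_pmf (\<lambda>u. S - {u}) (pmf_of_set (nbrs EB N v))) (\<lambda>T. g (card T))
       = g ?s + (if v \<in> S then (g (Suc ?s) - g ?s) * x v else (g (?s - 1) - g ?s) * y v)"
    if v: "v \<in> {1..N}" for v
  proof (cases "v \<in> S")
    case True
    have nb: "nbrs EA N v \<noteq> {}" using G v by (auto simp: goodG_def)
    have "(\<Sum>u\<in>nbrs EA N v. g (card (insert u S))) = (\<Sum>u\<in>nbrs EA N v. if u \<in> S then g ?s else g (Suc ?s))"
      by (rule sum.cong) (auto simp: finS insert_absorb)
    then show ?thesis using True nb avg_if[of "nbrs EA N v" S "g ?s" "g (Suc ?s)"]
      by (simp add: integral_pmf_of_set x_def)
  next
    case False
    have nb: "nbrs EB N v \<noteq> {}" using G v by (auto simp: goodG_def)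
    have h1: "(\<Sum>u\<in>nbrs EB N v. g (card (S - {u}))) = (\<Sum>u\<in>nbrs EB N v. if u \<in> S then g (?s - 1) else g ?s)"
      by (rule sum.cong) (auto simp: finS)
    have h2: "card (nbrs EB N v) = card (nbrs EB N v \<inter> S) + card (nbrs EB N v - S)"
      by (metis card_Int_Diff nbrs_fin)
    have "card (nbrs EB N v) > 0" using nb by (simp add: card_gt_0_iff)
    then have h3: "real (card (nbrs EB N v - S)) + real (card (nbrs EB N v \<inter> S)) > 0" using h2 by linarith
    show ?thesis using False nb avg_if[of "nbrs EB N v" S "g (?s - 1)" "g ?s"] h1 h2 h3
      by (simp add: integral_pmf_of_set y_def field_simps)
  qed
  have "E (moran_step EA EB N S) (\<lambda>T. g (card T)) =
     (\<Sum>v\<in>{1..N}. (g ?s + (if v \<in> S then (g (Suc ?s) - g ?s) * x v else (g (?s - 1) - g ?s) * y v)) / real N)"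
    unfolding moran_step_def
    by (subst pmf_expectation_bind_pmf_of_set) (use ne val fA fB in \<open>auto simp: divide_inverse mult.commute\<close>)
  also have "\<dots> = (\<Sum>v\<in>{1..N}. g ?s + (if v \<in> S then (g (Suc ?s) - g ?s) * x v else (g (?s - 1) - g ?s) * y v)) / real N"
    by (simp add: sum_divide_distrib)
  also have "(\<Sum>v\<in>{1..N}. g ?s + (if v \<in> S then (g (Suc ?s) - g ?s) * x v else (g (?s - 1) - g ?s) * y v))
     = N * g ?s + (g (Suc ?s) - g ?s) * (\<Sum>v\<in>S. x v) + (g (?s - 1) - g ?s) * (\<Sum>v\<in>{1..N}-S. y v)"
  proof -
    have "{1..N} \<inter> S = S" using S by auto
    then show ?thesis
      by (simp add: sum.distrib sum.If_cases Diff_eq sum_distrib_left)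
  qed
  finally have eq: "E (moran_step EA EB N S) (\<lambda>T. g (card T)) = (N * g ?s + (g (Suc ?s) - g ?s) * (\<Sum>v\<in>S. x v) + (g (?s - 1) - g ?s) * (\<Sum>v\<in>{1..N}-S. y v)) / N" .
  have sx: "(\<Sum>v\<in>S. x v) = (\<Sum>v\<in>S. real (card (nbrs EA N v - S)) / card (nbrs EA N v))" by (simp add: x_def)
  have sy: "(\<Sum>v\<in>{1..N}-S. y v) = (\<Sum>v\<in>{1..N}-S. real (card (nbrs EB N v \<inter> S)) / card (nbrs EB N v))" by (simp add: y_def)
  have Np: "real N > 0" using G by (auto simp: goodG_def)
  show ?thesis unfolding sx[symmetric] sy[symmetric] eq using Np by (simp add: field_simps)
qed


lemma nbrs_complete: "v \<in> {1..N} \<Longrightarrow> nbrs complete_graph N v = {1..N} - {v}"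
  by (auto simp: nbrs_def complete_graph_def)

lemma nbrs_bipL: "v \<le> N div 2 \<Longrightarrow> nbrs (bipartite_half N) N v = {u\<in>{1..N}. \<not> u \<le> N div 2}"
  by (auto simp: nbrs_def bipartite_half_def)

lemma nbrs_bipR: "\<not> v \<le> N div 2 \<Longrightarrow> nbrs (bipartite_half N) N v = {u\<in>{1..N}. u \<le> N div 2}"
  by (auto simp: nbrs_def bipartite_half_def)

lemma card_L: "card {u\<in>{1..N}. u \<le> N div 2} = N div 2"
proof -
  have le: "N div 2 \<le> N" by simp
  have "{u\<in>{1..N}. u \<le> N div 2} = {1..N div 2}"
  proof
    show "{u\<in>{1..N}. u \<le> N div 2} \<subseteq> {1..N div 2}" by auto
    show "{1..N div 2} \<subseteq> {u\<in>{1..N}. u \<le> N div 2}" using le by auto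
  qed
  then show ?thesis by simp
qed

lemma card_R: "even N \<Longrightarrow> card {u\<in>{1..N}. \<not> u \<le> N div 2} = N div 2"
proof -
  assume "even N"
  then obtain n where n: "N = 2 * n" by (rule evenE)
  have d: "N div 2 = n" using n by simp
  have "{u\<in>{1..N}. \<not> u \<le> N div 2} = {n + 1..2 * n}" unfolding d n by auto
  then show ?thesis using d by simp
qed

lemma good_complete_bip:
  assumes "even N" "N \<ge> 2"
  shows "goodG complete_graph (bipartite_half N) N" "goodG (bipartite_half N) complete_graph N"
proof -
  have c: "nbrs complete_graph N v \<noteq> {}" if "v \<in> {1..N}" for v
  proof -
    have "(if v = 1 then 2 else 1) \<in> nbrs complete_graph N v" using that assms
      by (auto simp: nbrs_complete)
    then show ?thesis by blast
  qed
  have b: "nbrs (bipartite_half N) N v \<noteq> {}" for v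
  proof (cases "v \<le> N div 2")
    case True
    have "card {u\<in>{1..N}. \<not> u \<le> N div 2} > 0" using card_R[OF assms(1)] assms by simp
    then have "{u\<in>{1..N}. \<not> u \<le> N div 2} \<noteq> {}" by (metis card.empty less_irrefl)
    then show ?thesis using nbrs_bipL[OF True] by simp
  next
    case False
    have "card {u\<in>{1..N}. u \<le> N div 2} > 0" using card_L[of N] assms by simp
    then have "{u\<in>{1..N}. u \<le> N div 2} \<noteq> {}" by (metis card.empty less_irrefl)
    then show ?thesis using nbrs_bipR[OF False] by simp
  qed
  show "goodG complete_graph (bipartite_half N) N" "goodG (bipartite_half N) complete_graph N"
    using b c assms by (auto simp: goodG_def)
qed

lemma complete_sums:
  assumes "S \<subseteq> {1..N}"
  shows "(\<Sum>v\<in>S. real (card (nbrs complete_graph N v - S)) / card (nbrs complete_graph N v))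
          = real (card S) * (real N - real (card S)) / (real N - 1)"
    and "(\<Sum>v\<in>{1..N}-S. real (card (nbrs complete_graph N v \<inter> S)) / card (nbrs complete_graph N v))
          = real (card S) * (real N - real (card S)) / (real N - 1)"
proof -
  have fS: "finite S" by (rule finite_subset[OF assms]) simp
  have cS: "card S \<le> N" using card_mono[OF _ assms] by simp
  have cD: "card ({1..N} - S) = N - card S" using assms fS by (simp add: card_Diff_subset)
  have "(\<Sum>v\<in>S. real (card (nbrs complete_graph N v - S)) / card (nbrs complete_graph N v))
      = (\<Sum>v\<in>S. real (N - card S) / (real N - 1))"
  proof (rule sum.cong)
    fix v assume v: "v \<in> S"
    then have vN: "v \<in> {1..N}" using assms by auto
    have "nbrs complete_graph N v - S = {1..N} - S" using v vN by (auto simp: nbrs_complete)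
    moreover have "card (nbrs complete_graph N v) = N - 1" using vN by (simp add: nbrs_complete)
    moreover have "N \<ge> 1" using vN by simp
    ultimately show "real (card (nbrs complete_graph N v - S)) / card (nbrs complete_graph N v)
        = real (N - card S) / (real N - 1)" using cD by (simp add: of_nat_diff)
  qed simp
  then show "(\<Sum>v\<in>S. real (card (nbrs complete_graph N v - S)) / card (nbrs complete_graph N v))
          = real (card S) * (real N - real (card S)) / (real N - 1)" using cS by (simp add: of_nat_diff)
  have "(\<Sum>v\<in>{1..N}-S. real (card (nbrs complete_graph N v \<inter> S)) / card (nbrs complete_graph N v))
      = (\<Sum>v\<in>{1..N}-S. real (card S) / (real N - 1))"
  proof (rule sum.cong)
    fix v assume v: "v \<in> {1..N} - S"
    then have vN: "v \<in> {1..N}" by auto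
    have "nbrs complete_graph N v \<inter> S = S" using v assms by (auto simp: nbrs_complete)
    moreover have "card (nbrs complete_graph N v) = N - 1" using vN by (simp add: nbrs_complete)
    moreover have "N \<ge> 1" using vN by simp
    ultimately show "real (card (nbrs complete_graph N v \<inter> S)) / card (nbrs complete_graph N v)
        = real (card S) / (real N - 1)" by (simp add: of_nat_diff)
  qed simp
  then show "(\<Sum>v\<in>{1..N}-S. real (card (nbrs complete_graph N v \<inter> S)) / card (nbrs complete_graph N v))
          = real (card S) * (real N - real (card S)) / (real N - 1)" using cS cD by (simp add: of_nat_diff mult.commute)
qed


lemma bip_sums:
  assumes "even N" "N \<ge> 2" "S \<subseteq> {1..N}"
  defines "n \<equiv> N div 2"
  defines "i \<equiv> card (S \<inter> {v. v \<le> n})"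
  defines "j \<equiv> card (S \<inter> - {v. v \<le> n})"
  shows "card S = i + j" "i \<le> n" "j \<le> n"
    "(\<Sum>v\<in>S. real (card (nbrs (bipartite_half N) N v - S)) / card (nbrs (bipartite_half N) N v))
       = (real i * (real n - real j) + real j * (real n - real i)) / real n"
    "(\<Sum>v\<in>{1..N}-S. real (card (nbrs (bipartite_half N) N v \<inter> S)) / card (nbrs (bipartite_half N) N v))
       = (real i * (real n - real j) + real j * (real n - real i)) / real n"
proof -
  define L where "L = {u\<in>{1..N}. u \<le> n}"
  define R where "R = {u\<in>{1..N}. \<not> u \<le> n}"
  have fS: "finite S" by (rule finite_subset[OF assms(3)]) simp
  have cL: "card L = n" unfolding L_def n_def by (rule card_L)
  have cR: "card R = n" unfolding R_def n_def by (rule card_R[OF assms(1)])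
  have SL: "S \<inter> {v. v \<le> n} = L \<inter> S" and SR: "S \<inter> - {v. v \<le> n} = R \<inter> S"
    using assms(3) by (auto simp: L_def R_def)
  show "card S = i + j" unfolding i_def j_def
    using card_Int_Diff[OF fS, of "{v. v \<le> n}"] by (simp add: Diff_eq)
  have fL: "finite L" "finite R" by (auto simp: L_def R_def)
  have "card (L \<inter> S) \<le> card L" by (rule card_mono[OF fL(1)]) auto
  then have iL: "i \<le> n" unfolding i_def SL using cL by simp
  have "card (R \<inter> S) \<le> card R" by (rule card_mono[OF fL(2)]) auto
  then have jR: "j \<le> n" unfolding j_def SR using cR by simp
  show "i \<le> n" "j \<le> n" using iL jR by auto
  have cRS: "card (R - S) = n - j" unfolding j_def SR using cR fL by (simp add: card_Diff_subset_Int)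
  have cLS: "card (L - S) = n - i" unfolding i_def SL using cL fL by (simp add: card_Diff_subset_Int)
  have npos: "n > 0" using assms(1,2) n_def by auto
  have nbL: "nbrs (bipartite_half N) N v = R" if "v \<le> n" for v
    using nbrs_bipL[of v N] that by (simp add: R_def n_def)
  have nbR: "nbrs (bipartite_half N) N v = L" if "\<not> v \<le> n" for v
    using nbrs_bipR[of v N] that by (simp add: L_def n_def)
  have "(\<Sum>v\<in>S. real (card (nbrs (bipartite_half N) N v - S)) / card (nbrs (bipartite_half N) N v))
      = (\<Sum>v\<in>S. if v \<le> n then real (n - j) / n else real (n - i) / n)"
    by (rule sum.cong) (auto simp: nbL nbR cRS cLS cL cR)
  also have "\<dots> = real i * (real (n - j) / n) + real j * (real (n - i) / n)"
    using fS by (simp add: sum.If_cases i_def j_def)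
  also have "\<dots> = (real i * (real n - real j) + real j * (real n - real i)) / real n"
    using iL jR by (simp add: of_nat_diff add_divide_distrib)
  finally show "(\<Sum>v\<in>S. real (card (nbrs (bipartite_half N) N v - S)) / card (nbrs (bipartite_half N) N v))
       = (real i * (real n - real j) + real j * (real n - real i)) / real n" .
  have "(\<Sum>v\<in>{1..N}-S. real (card (nbrs (bipartite_half N) N v \<inter> S)) / card (nbrs (bipartite_half N) N v))
      = (\<Sum>v\<in>{1..N}-S. if v \<le> n then real j / n else real i / n)"
    by (rule sum.cong) (auto simp: nbL nbR cL cR i_def j_def SL SR Int_commute)
  also have "\<dots> = real (card (L - S)) * (real j / n) + real (card (R - S)) * (real i / n)"
  proof -
    have "({1..N} - S) \<inter> {v. v \<le> n} = L - S" "({1..N} - S) \<inter> - {v. v \<le> n} = R - S"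
      by (auto simp: L_def R_def)
    then show ?thesis by (simp add: sum.If_cases)
  qed
  also have "\<dots> = (real i * (real n - real j) + real j * (real n - real i)) / real n"
    using iL jR cLS cRS npos by (simp add: of_nat_diff field_simps)
  finally show "(\<Sum>v\<in>{1..N}-S. real (card (nbrs (bipartite_half N) N v \<inter> S)) / card (nbrs (bipartite_half N) N v))
       = (real i * (real n - real j) + real j * (real n - real i)) / real n" .
qed


definition Qf :: "nat \<Rightarrow> nat \<Rightarrow> nat \<Rightarrow> real" where
  "Qf n i j = (real i * (real n - real j) + real j * (real n - real i)) / real n"

definition Cf :: "nat \<Rightarrow> nat \<Rightarrow> real" where
  "Cf N s = real s * (real N - real s) / (real N - 1)"

lemma complete_sums':
  assumes "S \<subseteq> {1..N}"
  shows "(\<Sum>v\<in>S. real (card (nbrs complete_graph N v - S)) / card (nbrs complete_graph N v)) = Cf N (card S)"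
    "(\<Sum>v\<in>{1..N}-S. real (card (nbrs complete_graph N v \<inter> S)) / card (nbrs complete_graph N v)) = Cf N (card S)"
proof -
  have cS: "card S \<le> N" using card_mono[OF _ assms] by simp
  show "(\<Sum>v\<in>S. real (card (nbrs complete_graph N v - S)) / card (nbrs complete_graph N v)) = Cf N (card S)"
    using complete_sums(1)[OF assms] cS by (simp add: Cf_def of_nat_diff)
  show "(\<Sum>v\<in>{1..N}-S. real (card (nbrs complete_graph N v \<inter> S)) / card (nbrs complete_graph N v)) = Cf N (card S)"
    using complete_sums(2)[OF assms] cS by (simp add: Cf_def of_nat_diff mult.commute)
qed

lemma drift:
  assumes "even N" "N \<ge> 2" "S \<subseteq> {1..N}"
  obtains i j where "card S = i + j" "i \<le> N div 2" "j \<le> N div 2"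
    "\<And>g. E (moran_step (bipartite_half N) complete_graph N S) (\<lambda>T. g (card T)) =
        g (card S) + ((g (Suc (card S)) - g (card S)) * Qf (N div 2) i j
                      + (g (card S - 1) - g (card S)) * Cf N (card S)) / N"
    "\<And>g. E (moran_step complete_graph (bipartite_half N) N S) (\<lambda>T. g (card T)) =
        g (card S) + ((g (Suc (card S)) - g (card S)) * Cf N (card S)
                      + (g (card S - 1) - g (card S)) * Qf (N div 2) i j) / N"
proof -
  note bs = bip_sums[OF assms]
  note G = good_complete_bip[OF assms(1,2)]
  have s1: "(\<Sum>v\<in>S. real (card (nbrs (bipartite_half N) N v - S)) / card (nbrs (bipartite_half N) N v))
     = Qf (N div 2) (card (S \<inter> {v. v \<le> N div 2})) (card (S \<inter> - {v. v \<le> N div 2}))"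
    using bs(4) by (simp add: Qf_def)
  have s2: "(\<Sum>v\<in>{1..N}-S. real (card (nbrs (bipartite_half N) N v \<inter> S)) / card (nbrs (bipartite_half N) N v))
     = Qf (N div 2) (card (S \<inter> {v. v \<le> N div 2})) (card (S \<inter> - {v. v \<le> N div 2}))"
    using bs(5) by (simp add: Qf_def)
  show ?thesis
  proof (rule that[OF bs(1,2,3)])
    fix g :: "nat \<Rightarrow> real"
    show "E (moran_step (bipartite_half N) complete_graph N S) (\<lambda>T. g (card T)) =
        g (card S) + ((g (Suc (card S)) - g (card S)) * Qf (N div 2) (card (S \<inter> {v. v \<le> N div 2})) (card (S \<inter> - {v. v \<le> N div 2}))
                      + (g (card S - 1) - g (card S)) * Cf N (card S)) / N"
      using step_card[OF G(2) assms(3), of g] s1 complete_sums'(2)[OF assms(3)]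
      by (simp add: add_divide_distrib)
    show "E (moran_step complete_graph (bipartite_half N) N S) (\<lambda>T. g (card T)) =
        g (card S) + ((g (Suc (card S)) - g (card S)) * Cf N (card S)
                      + (g (card S - 1) - g (card S)) * Qf (N div 2) (card (S \<inter> {v. v \<le> N div 2})) (card (S \<inter> - {v. v \<le> N div 2}))) / N"
      using step_card[OF G(1) assms(3), of g] s2 complete_sums'(1)[OF assms(3)]
      by (simp add: add_divide_distrib)
  qed
qed

lemma Q_facts:
  assumes "even N" "N \<ge> 2" "s = i + j" "i \<le> N div 2" "j \<le> N div 2"
  shows "Qf (N div 2) i j \<ge> real s * (real N - real s) / real N"
    "Qf (N div 2) i j \<ge> 0"
    "s = N \<Longrightarrow> Qf (N div 2) i j = 0"
    "Cf N s = real N / (real N - 1) * (real s * (real N - real s) / real N)"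
    "Cf N s \<ge> 0"
    "s = N \<Longrightarrow> Cf N s = 0"
    "s = 0 \<Longrightarrow> Cf N s = 0"
proof -
  obtain n where n: "N = 2 * n" using assms(1) by auto
  have nd: "N div 2 = n" using n by simp
  have npos: "real n > 0" using n assms(2) by simp
  have ri: "real i \<le> real n" "real j \<le> real n" using assms(4,5) nd by auto
  have key: "2 * (real i * (real n - real j) + real j * (real n - real i)) - (real i + real j) * (2 * real n - (real i + real j))
      = (real i - real j)^2" by (simp add: algebra_simps power2_eq_square)
  have "(real i + real j) * (2 * real n - (real i + real j)) / (2 * real n) \<le>
        (real i * (real n - real j) + real j * (real n - real i)) / real n"
  proof -
    have "(real i + real j) * (2 * real n - (real i + real j)) \<le> 2 * (real i * (real n - real j) + real j * (real n - real i))"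
    proof -
      have "(real i - real j)^2 \<ge> 0" by simp
      then show ?thesis using key by linarith
    qed
    then have "(real i + real j) * (2 * real n - (real i + real j)) / (2 * real n) \<le>
        2 * (real i * (real n - real j) + real j * (real n - real i)) / (2 * real n)"
      using npos by (intro divide_right_mono) auto
    moreover have eqY: "2 * Y / (2 * real n) = Y / real n" for Y :: real by simp
    ultimately show ?thesis by (simp only: eqY)
  qed
  then show "Qf (N div 2) i j \<ge> real s * (real N - real s) / real N"
    using assms(3) n nd by (simp add: Qf_def)
  show "Qf (N div 2) i j \<ge> 0" using ri npos unfolding Qf_def nd
    by (intro divide_nonneg_pos add_nonneg_nonneg mult_nonneg_nonneg) auto
  show "s = N \<Longrightarrow> Qf (N div 2) i j = 0"
  proof -
    assume "s = N"
    then have "i = n" "j = n" using assms(3,4,5) n nd by auto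
    then show ?thesis by (simp add: Qf_def nd)
  qed
  have N1: "real N - 1 > 0" using assms(2) by simp
  show "Cf N s = real N / (real N - 1) * (real s * (real N - real s) / real N)"
    using N1 assms(2) by (simp add: Cf_def field_simps)
  have "s \<le> N" using assms(3,4,5) n nd by simp
  then show "Cf N s \<ge> 0" using N1 unfolding Cf_def by (intro divide_nonneg_pos mult_nonneg_nonneg) auto
  show "s = N \<Longrightarrow> Cf N s = 0" "s = 0 \<Longrightarrow> Cf N s = 0" by (auto simp: Cf_def)
qed


locale hyp =
  fixes N s :: nat and Q C :: real
  assumes N2: "N \<ge> 2" and sN: "s \<le> N"
    and QX: "Q \<ge> real s * (real N - real s) / real N" and Q0: "Q \<ge> 0"
    and CX: "C = real N / (real N - 1) * (real s * (real N - real s) / real N)"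
    and QN: "s = N \<Longrightarrow> Q = 0"
begin

lemma C0: "C \<ge> 0" using N2 sN unfolding CX by (intro mult_nonneg_nonneg divide_nonneg_nonneg) auto
lemma C_s0: "s = 0 \<Longrightarrow> C = 0" unfolding CX by simp
lemma C_sN: "s = N \<Longrightarrow> C = 0" unfolding CX by simp
lemma C_le: "C \<le> real N / (real N - 1) * Q" unfolding CX using QX N2 by (intro mult_left_mono) auto

definition ind :: "nat \<Rightarrow> real" where "ind k = (if k = N then 1 else 0)"
definition tr :: "nat \<Rightarrow> real" where "tr k = (if 0 < k \<and> k < N then 1 else 0)"

lemma ind1: "(ind (Suc s) - ind s) * Q + (ind (s - 1) - ind s) * C \<ge> 0"
proof (cases "s = N")
  case True then show ?thesis using QN C_sN by simp
next
  case False then show ?thesis using Q0 C0 by (simp add: ind_def)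
qed

lemma ind2: "(ind (Suc s) - ind s) * C + (ind (s - 1) - ind s) * Q \<ge> 0"
proof (cases "s = N")
  case True then show ?thesis using QN C_sN by simp
next
  case False then show ?thesis using Q0 C0 by (simp add: ind_def)
qed

definition r :: real where "r = real N / (real N - 1)"
definition phi :: "nat \<Rightarrow> real" where "phi k = (r ^ k - 1) / (r ^ N - 1)"

lemma r1: "r > 1" using N2 by (simp add: r_def field_simps)
lemma D: "r ^ N - 1 > 0" using r1 N2 by (simp add: one_less_power)

lemma phi1: "(phi (Suc s) - phi s) * Q + (phi (s - 1) - phi s) * C \<ge> 0"
proof (cases s)
  case 0 then show ?thesis using C_s0 Q0 r1 D by (simp add: phi_def)
next
  case (Suc t)
  define a where "a = r ^ t * (r - 1) / (r ^ N - 1)"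
  have a0: "a \<ge> 0" unfolding a_def using r1 D by simp
  have e1: "phi (Suc s) - phi s = a * r" unfolding phi_def a_def Suc
    by (simp add: diff_divide_distrib[symmetric] algebra_simps)
  have e2': "phi s - phi (s - 1) = a" unfolding phi_def a_def Suc
    by (simp add: diff_divide_distrib[symmetric] algebra_simps)
  then have e2: "phi (s - 1) - phi s = - a" by simp
  have "C \<le> r * Q" using C_le by (simp add: r_def)
  then have "r * Q - C \<ge> 0" by simp
  moreover have "(phi (Suc s) - phi s) * Q + (phi (s - 1) - phi s) * C = a * (r * Q - C)"
    unfolding e1 e2 by (simp add: algebra_simps)
  ultimately show ?thesis using a0 by simp
qed

lemma phi_le: "k \<le> N \<Longrightarrow> phi k \<le> ind k + tr k"
proof -
  assume k: "k \<le> N"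
  consider "k = 0" | "k = N" | "0 < k \<and> k < N" using k by linarith
  then show ?thesis
  proof cases
    case 1 then show ?thesis using N2 by (simp add: phi_def ind_def tr_def)
  next
    case 2 then show ?thesis using D by (simp add: phi_def ind_def tr_def)
  next
    case 3
    have "r ^ k \<le> r ^ N" using r1 k by (intro power_increasing) auto
    then have "phi k \<le> 1" using D by (simp add: phi_def)
    then show ?thesis using 3 by (simp add: ind_def tr_def)
  qed
qed

definition q :: real where "q = (real N - 1) / real N"
definition psi :: "nat \<Rightarrow> real" where "psi k = (1 - q ^ k) / (1 - q ^ N)"

lemma q01: "q > 0" "q < 1" using N2 by (auto simp: q_def field_simps)
lemma D2: "1 - q ^ N > 0" using q01 N2 by (simp add: power_less_one_iff)

lemma psi2: "((- psi (Suc s)) - (- psi s)) * C + ((- psi (s - 1)) - (- psi s)) * Q \<ge> 0"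
proof (cases s)
  case 0 then show ?thesis using C_s0 Q0 by (simp add: psi_def)
next
  case (Suc t)
  define a where "a = q ^ t * (1 - q) / (1 - q ^ N)"
  have a0: "a \<ge> 0" unfolding a_def using q01 D2 by simp
  have e1': "psi (Suc s) - psi s = a * q" unfolding psi_def a_def Suc
    by (simp add: diff_divide_distrib[symmetric] algebra_simps)
  then have e1: "(- psi (Suc s)) - (- psi s) = - a * q" by simp
  have e2: "(- psi (s - 1)) - (- psi s) = a" unfolding psi_def a_def Suc
    by (simp add: diff_divide_distrib[symmetric] algebra_simps)
  have qr: "q * (real N / (real N - 1)) = 1" using N2 by (simp add: q_def field_simps)
  have "q * C = real s * (real N - real s) / real N" unfolding CX
    by (metis qr mult.assoc mult_1)
  then have "q * C \<le> Q" using QX by simp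
  then have "Q - q * C \<ge> 0" by simp
  moreover have "((- psi (Suc s)) - (- psi s)) * C + ((- psi (s - 1)) - (- psi s)) * Q = a * (Q - q * C)"
    unfolding e1 e2 by (simp add: algebra_simps)
  ultimately show ?thesis using a0 by simp
qed

lemma ind_le_psi: "k \<le> N \<Longrightarrow> ind k \<le> psi k"
proof -
  assume k: "k \<le> N"
  have "q ^ k \<le> 1" using q01 by (simp add: power_le_one)
  then have "psi k \<ge> 0" using D2 by (simp add: psi_def)
  then show ?thesis using D2 by (simp add: ind_def psi_def)
qed

definition h :: "nat \<Rightarrow> real" where "h k = 3 ^ k"

lemma h1: "(h (Suc s) - h s) * Q + (h (s - 1) - h s) * C \<ge> tr s"
proof (cases s)
  case 0 then show ?thesis using C_s0 Q0 by (simp add: h_def tr_def)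
next
  case (Suc t)
  have r2: "real N / (real N - 1) \<le> 2" using N2 by (simp add: field_simps)
  have "C \<le> 2 * Q" using C_le r2 Q0 by (meson mult_right_mono order_trans)
  have e: "(h (Suc s) - h s) * Q + (h (s - 1) - h s) * C = 2 * 3^t * (3 * Q - C)"
    unfolding h_def Suc by (simp add: algebra_simps)
  have "2 * 3^t * (3 * Q - C) \<ge> 2 * 1 * Q"
  proof (rule mult_mono)
    show "2 * 1 \<le> 2 * (3::real)^t" by simp
    show "Q \<le> 3 * Q - C" using \<open>C \<le> 2 * Q\<close> by simp
  qed (use Q0 in auto)
  moreover have "2 * Q \<ge> tr s"
  proof (cases "s < N")
    case True
    have "real s * (real N - real s) \<ge> real N - 1"
    proof -
      have "(real s - 1) * (real N - real s - 1) \<ge> 0" using True Suc by (intro mult_nonneg_nonneg) auto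
      then show ?thesis by (simp add: algebra_simps)
    qed
    then have "real s * (real N - real s) / real N \<ge> (real N - 1) / real N" using N2
      by (intro divide_right_mono) auto
    moreover have "(real N - 1) / real N \<ge> 1/2" using N2 by (simp add: field_simps)
    ultimately have "Q \<ge> 1/2" using QX by linarith
    then show ?thesis using True Suc by (simp add: tr_def)
  next
    case False then show ?thesis using Q0 by (simp add: tr_def)
  qed
  ultimately show ?thesis using e by simp
qed

end


lemma hyp0: "N \<ge> 2 \<Longrightarrow> hyp N 0 0 0" by unfold_locales auto

lemma hyp_inst:
  assumes "even N" "N \<ge> 2" "s = i + j" "i \<le> N div 2" "j \<le> N div 2"
  shows "hyp N s (Qf (N div 2) i j) (Cf N s)"
proof -
  note qf = Q_facts[OF assms]
  have "s \<le> N" using assms by auto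
  then show ?thesis using qf assms(2) by unfold_locales auto
qed

lemma step_ge1:
  assumes "even N" "N \<ge> 2" "S \<subseteq> {1..N}"
    and "\<And>Q C. hyp N (card S) Q C \<Longrightarrow> c (card S) \<le> (g (Suc (card S)) - g (card S)) * Q + (g (card S - 1) - g (card S)) * C"
  shows "g (card S) + c (card S) / N \<le> E (moran_step (bipartite_half N) complete_graph N S) (\<lambda>T. g (card T))"
proof -
  show ?thesis
  proof (rule drift[OF assms(1,2,3)])
    fix i j assume ij: "card S = i + j" "i \<le> N div 2" "j \<le> N div 2"
      and e1: "\<And>h. E (moran_step (bipartite_half N) complete_graph N S) (\<lambda>T. h (card T)) =
        h (card S) + ((h (Suc (card S)) - h (card S)) * Qf (N div 2) i j
                      + (h (card S - 1) - h (card S)) * Cf N (card S)) / N"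
      and e2: "\<And>h. E (moran_step complete_graph (bipartite_half N) N S) (\<lambda>T. h (card T)) =
        h (card S) + ((h (Suc (card S)) - h (card S)) * Cf N (card S)
                      + (h (card S - 1) - h (card S)) * Qf (N div 2) i j) / N"

    have H: "hyp N (card S) (Qf (N div 2) i j) (Cf N (card S))" by (rule hyp_inst[OF assms(1,2) ij])
    have "c (card S) / N \<le> ((g (Suc (card S)) - g (card S)) * Qf (N div 2) i j
                        + (g (card S - 1) - g (card S)) * Cf N (card S)) / N"
      using assms(4)[OF H] by (intro divide_right_mono) auto
    then show ?thesis unfolding e1 by simp
  qed
qed

lemma step_ge2:
  assumes "even N" "N \<ge> 2" "S \<subseteq> {1..N}"
    and "\<And>Q C. hyp N (card S) Q C \<Longrightarrow> c (card S) \<le> (g (Suc (card S)) - g (card S)) * C + (g (card S - 1) - g (card S)) * Q"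
  shows "g (card S) + c (card S) / N \<le> E (moran_step complete_graph (bipartite_half N) N S) (\<lambda>T. g (card T))"
proof -
  show ?thesis
  proof (rule drift[OF assms(1,2,3)])
    fix i j assume ij: "card S = i + j" "i \<le> N div 2" "j \<le> N div 2"
      and e1: "\<And>h. E (moran_step (bipartite_half N) complete_graph N S) (\<lambda>T. h (card T)) =
        h (card S) + ((h (Suc (card S)) - h (card S)) * Qf (N div 2) i j
                      + (h (card S - 1) - h (card S)) * Cf N (card S)) / N"
      and e2: "\<And>h. E (moran_step complete_graph (bipartite_half N) N S) (\<lambda>T. h (card T)) =
        h (card S) + ((h (Suc (card S)) - h (card S)) * Cf N (card S)
                      + (h (card S - 1) - h (card S)) * Qf (N div 2) i j) / N"

    have H: "hyp N (card S) (Qf (N div 2) i j) (Cf N (card S))" by (rule hyp_inst[OF assms(1,2) ij])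
    have "c (card S) / N \<le> ((g (Suc (card S)) - g (card S)) * Cf N (card S)
                        + (g (card S - 1) - g (card S)) * Qf (N div 2) i j) / N"
      using assms(4)[OF H] by (intro divide_right_mono) auto
    then show ?thesis unfolding e2 by simp
  qed
qed

lemma card_le: "T \<subseteq> {1..N} \<Longrightarrow> card T \<le> N"
  using card_mono[of "{1..N}" T] by simp

lemma E_le:
  assumes "set_pmf p \<subseteq> Pow {1..N}" "\<And>T. T \<subseteq> {1..N} \<Longrightarrow> f T \<le> g T"
  shows "E p f \<le> E p g"
  unfolding E_sum[OF assms(1)] by (rule sum_mono) (use assms(2) in \<open>auto intro: mult_left_mono\<close>)

lemma E_add:
  assumes "set_pmf p \<subseteq> Pow {1..N}"
  shows "E p (\<lambda>T. f T + g T) = E p f + E p g"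
  unfolding E_sum[OF assms(1)] by (simp add: sum.distrib distrib_left)

lemma E_cmult:
  assumes "set_pmf p \<subseteq> Pow {1..N}"
  shows "E p (\<lambda>T. a * f T) = a * E p f"
  unfolding E_sum[OF assms(1)] by (simp add: sum_distrib_left mult.left_commute)

lemma E_nonneg:
  assumes "set_pmf p \<subseteq> Pow {1..N}" "\<And>T. T \<subseteq> {1..N} \<Longrightarrow> f T \<ge> 0"
  shows "E p f \<ge> 0"
  unfolding E_sum[OF assms(1)] by (rule sum_nonneg) (use assms(2) in auto)

lemma E_const_le:
  assumes "set_pmf p \<subseteq> Pow {1..N}" "\<And>T. T \<subseteq> {1..N} \<Longrightarrow> f T \<le> a"
  shows "E p f \<le> a"
proof -
  have "E p f \<le> E p (\<lambda>_. a)" by (rule E_le[OF assms(1)]) (use assms(2) in auto)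
  then show ?thesis by simp
qed

lemma P_eq:
  assumes "goodG EA EB N" "S0 \<subseteq> {1..N}" "N \<ge> 2"
  shows "pmf (moran_dist EA EB N S0 n) {1..N} = E (moran_dist EA EB N S0 n) (\<lambda>T. hyp.ind N (card T))"
proof -
  note H = hyp0[OF assms(3)]
  have "E (moran_dist EA EB N S0 n) (\<lambda>T. hyp.ind N (card T)) =
      (\<Sum>T\<in>Pow {1..N}. pmf (moran_dist EA EB N S0 n) T * hyp.ind N (card T))"
    by (rule E_sum[OF dist_support[OF assms(1,2)]])
  also have "\<dots> = (\<Sum>T\<in>Pow {1..N}. if T = {1..N} then pmf (moran_dist EA EB N S0 n) T else 0)"
  proof (rule sum.cong)
    fix T assume T: "T \<in> Pow {1..N}"
    have "card T = N \<longleftrightarrow> T = {1..N}"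
      using T card_subset_eq[of "{1..N}" T] by auto
    then show "pmf (moran_dist EA EB N S0 n) T * hyp.ind N (card T) = (if T = {1..N} then pmf (moran_dist EA EB N S0 n) T else 0)"
      using hyp.ind_def[OF H] by auto
  qed simp
  also have "\<dots> = pmf (moran_dist EA EB N S0 n) {1..N}" by (simp add: sum.delta')
  finally show ?thesis by simp
qed

lemma P_conv:
  assumes "goodG EA EB N" "S0 \<subseteq> {1..N}" "N \<ge> 2"
    and "\<And>S. S \<subseteq> {1..N} \<Longrightarrow> E (moran_step EA EB N S) (\<lambda>T. hyp.ind N (card T)) \<ge> hyp.ind N (card S)"
  shows "(\<lambda>n. pmf (moran_dist EA EB N S0 n) {1..N}) \<longlonglongrightarrow> lim (\<lambda>n. pmf (moran_dist EA EB N S0 n) {1..N})"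
proof -
  let ?P = "\<lambda>n. pmf (moran_dist EA EB N S0 n) {1..N}"
  have "?P n \<le> ?P (Suc n)" for n
  proof -
    have "E (moran_dist EA EB N S0 (Suc n)) (\<lambda>T. hyp.ind N (card T)) \<ge>
      E (moran_dist EA EB N S0 n) (\<lambda>T. hyp.ind N (card T)) + E (moran_dist EA EB N S0 n) (\<lambda>_. 0)"
      by (rule E_step_mono[OF assms(1,2)]) (use assms(4) in auto)
    then show ?thesis using P_eq[OF assms(1,2,3)] by simp
  qed
  then have inc: "incseq ?P" by (rule incseq_SucI)
  have bdd: "bdd_above (range ?P)" by (rule bdd_aboveI[of _ 1]) (auto simp: pmf_le_1)
  have "?P \<longlonglongrightarrow> (SUP i. ?P i)" by (rule LIMSEQ_incseq_SUP[OF bdd inc])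
  then show ?thesis by (simp add: limI)
qed


lemma upper_v:
  assumes N: "even N" "N \<ge> 2" and v: "v \<in> {1..N}"
  shows "lim (\<lambda>n. pmf (moran_dist complete_graph (bipartite_half N) N {v} n) {1..N}) \<le> hyp.psi N 1"
proof -
  note G = good_complete_bip(1)[OF N]
  have S0: "{v} \<subseteq> {1..N}" using v by auto
  note H0 = hyp0[OF N(2)]
  let ?D = "moran_dist complete_graph (bipartite_half N) N {v}"
  have conv: "(\<lambda>n. pmf (?D n) {1..N}) \<longlonglongrightarrow> lim (\<lambda>n. pmf (?D n) {1..N})"
  proof (rule P_conv[OF G S0 N(2)])
    fix S :: "nat set" assume S: "S \<subseteq> {1..N}"
    have "hyp.ind N (card S) + 0 / N \<le> E (moran_step complete_graph (bipartite_half N) N S) (\<lambda>T. hyp.ind N (card T))"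
      by (rule step_ge2[where c="\<lambda>_. 0", OF N S]) (rule hyp.ind2)
    then show "hyp.ind N (card S) \<le> E (moran_step complete_graph (bipartite_half N) N S) (\<lambda>T. hyp.ind N (card T))" by simp
  qed
  have bnd: "pmf (?D n) {1..N} \<le> hyp.psi N 1" for n
  proof -
    have "- hyp.psi N (card {v}) \<le> E (?D n) (\<lambda>T. - hyp.psi N (card T))"
    proof (rule E_mono_gen[OF G S0])
      fix S :: "nat set" assume S: "S \<subseteq> {1..N}"
      have "- hyp.psi N (card S) + 0 / N \<le> E (moran_step complete_graph (bipartite_half N) N S) (\<lambda>T. - hyp.psi N (card T))"
        by (rule step_ge2[where c="\<lambda>_. 0" and g="\<lambda>k. - hyp.psi N k", OF N S]) (rule hyp.psi2)
      then show "- hyp.psi N (card S) \<le> E (moran_step complete_graph (bipartite_half N) N S) (\<lambda>T. - hyp.psi N (card T))" by simp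
    qed
    moreover have "E (?D n) (\<lambda>T. - hyp.psi N (card T)) = - E (?D n) (\<lambda>T. hyp.psi N (card T))"
      using E_cmult[OF dist_support[OF G S0], where a="-1"] by simp
    moreover have "E (?D n) (\<lambda>T. hyp.ind N (card T)) \<le> E (?D n) (\<lambda>T. hyp.psi N (card T))"
      by (rule E_le[OF dist_support[OF G S0]]) (use hyp.ind_le_psi[OF H0] card_le in auto)
    ultimately show ?thesis using P_eq[OF G S0 N(2)] by simp
  qed
  show ?thesis by (rule LIMSEQ_le_const2[OF conv]) (use bnd in auto)
qed

lemma lower_v:
  assumes N: "even N" "N \<ge> 2" and v: "v \<in> {1..N}"
  shows "lim (\<lambda>n. pmf (moran_dist (bipartite_half N) complete_graph N {v} n) {1..N}) \<ge> hyp.phi N 1"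
proof -
  note G = good_complete_bip(2)[OF N]
  have S0: "{v} \<subseteq> {1..N}" using v by auto
  note H0 = hyp0[OF N(2)]
  note sup = dist_support[OF G S0]
  let ?D = "moran_dist (bipartite_half N) complete_graph N {v}"
  let ?P = "\<lambda>n. pmf (?D n) {1..N}"
  have conv: "?P \<longlonglongrightarrow> lim ?P"
  proof (rule P_conv[OF G S0 N(2)])
    fix S :: "nat set" assume S: "S \<subseteq> {1..N}"
    have "hyp.ind N (card S) + 0 / N \<le> E (moran_step (bipartite_half N) complete_graph N S) (\<lambda>T. hyp.ind N (card T))"
      by (rule step_ge1[where c="\<lambda>_. 0", OF N S]) (rule hyp.ind1)
    then show "hyp.ind N (card S) \<le> E (moran_step (bipartite_half N) complete_graph N S) (\<lambda>T. hyp.ind N (card T))" by simp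
  qed
  define a where "a n = E (?D n) (\<lambda>T. hyp.tr N (card T) / N)" for n
  have a0: "a n \<ge> 0" for n unfolding a_def
    by (rule E_nonneg[OF sup]) (simp add: hyp.tr_def[OF H0])
  have hstep: "E (?D (Suc n)) (\<lambda>T. hyp.h (card T)) \<ge> E (?D n) (\<lambda>T. hyp.h (card T)) + a n" for n
    unfolding a_def
  proof (rule E_step_mono[OF G S0])
    fix S :: "nat set" assume S: "S \<subseteq> {1..N}"
    show "hyp.h (card S) + hyp.tr N (card S) / N \<le> E (moran_step (bipartite_half N) complete_graph N S) (\<lambda>T. hyp.h (card T))"
      by (rule step_ge1[where c="hyp.tr N" and g="hyp.h", OF N S]) (rule hyp.h1)
  qed
  have hsum: "E (?D n) (\<lambda>T. hyp.h (card T)) \<ge> hyp.h (card {v}) + (\<Sum>k<n. a k)" for n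
  proof (induction n)
    case 0 then show ?case by (simp add: E_0)
  next
    case (Suc n) then show ?case using hstep[of n] by simp
  qed
  have hle: "E (?D n) (\<lambda>T. hyp.h (card T)) \<le> 3 ^ N" for n
    by (rule E_const_le[OF sup]) (simp add: hyp.h_def[OF H0] card_le power_increasing)
  have "(\<Sum>k<n. a k) \<le> 3 ^ N" for n
    using hsum[of n] hle[of n] by (simp add: hyp.h_def[OF H0])
  then have "summable a" by (intro summableI_nonneg_bounded[where x="3^N"]) (use a0 in auto)
  then have a_lim: "a \<longlonglongrightarrow> 0" by (rule summable_LIMSEQ_zero)
  have low: "hyp.phi N 1 \<le> ?P n + real N * a n" for n
  proof -
    have "hyp.phi N (card {v}) \<le> E (?D n) (\<lambda>T. hyp.phi N (card T))"
    proof (rule E_mono_gen[OF G S0])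
      fix S :: "nat set" assume S: "S \<subseteq> {1..N}"
      have "hyp.phi N (card S) + 0 / N \<le> E (moran_step (bipartite_half N) complete_graph N S) (\<lambda>T. hyp.phi N (card T))"
        by (rule step_ge1[where c="\<lambda>_. 0", OF N S]) (rule hyp.phi1)
      then show "hyp.phi N (card S) \<le> E (moran_step (bipartite_half N) complete_graph N S) (\<lambda>T. hyp.phi N (card T))" by simp
    qed
    also have "\<dots> \<le> E (?D n) (\<lambda>T. hyp.ind N (card T) + hyp.tr N (card T))"
      by (rule E_le[OF sup]) (use hyp.phi_le[OF H0] card_le in auto)
    also have "\<dots> = ?P n + E (?D n) (\<lambda>T. hyp.tr N (card T))"
      using E_add[OF sup] P_eq[OF G S0 N(2)] by simp
    also have "E (?D n) (\<lambda>T. hyp.tr N (card T)) = real N * a n"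
    proof -
      have fe: "(\<lambda>T. real N * (hyp.tr N (card T) / N)) = (\<lambda>T. hyp.tr N (card T))"
        using N(2) by auto
      have "E (?D n) (\<lambda>T. hyp.tr N (card T)) = E (?D n) (\<lambda>T. real N * (hyp.tr N (card T) / N))"
        by (simp only: fe)
      also have "\<dots> = real N * a n"
        unfolding a_def by (rule E_cmult[OF sup])
      finally show ?thesis .
    qed
    finally show ?thesis by simp
  qed
  have "(\<lambda>n. ?P n + real N * a n) \<longlonglongrightarrow> lim ?P + real N * 0"
    by (intro tendsto_intros conv a_lim)
  then show ?thesis by (intro LIMSEQ_le_const[where a="hyp.phi N 1"]) (use low in auto)
qed

theorem theorem2:
  fixes N :: nat
  assumes "even N" and "N \<ge> 2"
  shows "fix_prob (bipartite_half N) complete_graph N > 1 / (exp 1 - 1) * (1 / real N)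
     \<and> fix_prob complete_graph (bipartite_half N) N < exp 1 / (exp 1 - 1) * (1 / real N)"
proof
  note H0 = hyp0[OF assms(2)]
  have Np: "real N > 0" using assms by simp
  have "(\<Sum>v\<in>{1..N}. hyp.phi N 1) \<le> (\<Sum>v\<in>{1..N}. lim (\<lambda>n. pmf (moran_dist (bipartite_half N) complete_graph N {v} n) {1..N}))"
    by (rule sum_mono) (rule lower_v[OF assms])
  then have "hyp.phi N 1 \<le> fix_prob (bipartite_half N) complete_graph N"
    unfolding fix_prob_def using Np by (simp add: field_simps)
  moreover have "hyp.phi N 1 > 1 / (exp 1 - 1) * (1 / real N)"
    using lower_num[OF assms] by (simp add: hyp.phi_def[OF H0] hyp.r_def[OF H0])
  ultimately show "fix_prob (bipartite_half N) complete_graph N > 1 / (exp 1 - 1) * (1 / real N)" by linarith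
  have "(\<Sum>v\<in>{1..N}. lim (\<lambda>n. pmf (moran_dist complete_graph (bipartite_half N) N {v} n) {1..N})) \<le> (\<Sum>v\<in>{1..N}. hyp.psi N 1)"
    by (rule sum_mono) (rule upper_v[OF assms])
  then have "fix_prob complete_graph (bipartite_half N) N \<le> hyp.psi N 1"
    unfolding fix_prob_def using Np by (simp add: field_simps)
  moreover have "hyp.psi N 1 < exp 1 / (exp 1 - 1) * (1 / real N)"
    using upper_num[OF assms(2)] by (simp add: hyp.psi_def[OF H0] hyp.q_def[OF H0])
  ultimately show "fix_prob complete_graph (bipartite_half N) N < exp 1 / (exp 1 - 1) * (1 / real N)" by linarith
qed

end
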